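(* Under the CME setup, if $k$ is a characteristic kernel, then $(\mathcal G\otimes\mathcal H)_{\mathcal C}$ is dense in $L^2_{\mathcal C}(\mathbb P_X;\mathcal G)$. Consequently, $[\mathfrak m]\in\overline{(\mathcal G\otimes\mathcal H)_{\mathcal C}}^{L^2_{\mathcal C}(\mathbb P_X;\mathcal G)}$.
   Context: CME setup: - $X:\Omega\to\mathcal X$ and $Y:\Omega\to\mathcal Y$ are random variables, with $\mathcal X$ a measurable space and $\mathcal Y$ a Borel space. - $k$ and $\ell$ are measurable symmetric positive definite kernels on $\mathcal X$ and $\mathcal Y$, with separable RKHSs $\mathcal H$ and $\mathcal G$ respectively. - The feature maps are $\varphi(x)=k(x,\cdot)$, which is assumed injective, and $\psi(y)=\ell(y,\cdot)$. - $V:=\varphi(X)\in L^2(\mathbb P;\mathcal H)$ and $U:=\psi(Y)\in L^2(\mathbb P;\mathcal G)$. - For $h\in\mathcal H$: $\|h\|_{\mathcal H}=0$ iff $h=0$ $\mathbb P_X$-a.e. - $\mathcal C$ is the subspace of $\mathbb P_X$-a.e. constant functions in $L^2(\mathbb P_X;\mathcal G)$, and $L^2_{\mathcal C}(\mathbb P_X;\mathcal G):=L^2(\mathbb P_X;\mathcal G)/\mathcal C$, with inner product $\langle[f_1],[f_2]\rangle=\langle f_1-\mathbb Ef_1(X),f_2-\mathbb Ef_2(X)\rangle_{L^2(\mathbb P_X;\mathcal G)}$. For a subspace $\mathcal U$, $\mathcal U_{\mathcal C}:=\mathcal U/(\mathcal U\cap\mathcal C)$. - $\mathcal G\otimes\mathcal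 H$ is viewed as a subspace of $L^2(\mathbb P_X;\mathcal G)$ via $(g\otimes h)(x)=h(x)g$. - $\mathfrak m(x)=\mathbb E[U|X=x]\in L^2(\mathbb P_X;\mathcal G)$. - The kernel $k$ is characteristic if, for probability measures $Q_1,Q_2$ on $\mathcal X$ for which the mean embeddings $\int\varphi\,dQ_i\in\mathcal H$ exist, $\int\varphi\,dQ_1=\int\varphi\,dQ_2$ implies $Q_1=Q_2$. *)

theory Defs
  imports "HOL-Probability.Probability"
begin

definition L2 :: "'x measure \<Rightarrow> ('x \<Rightarrow> 'g::{real_inner,banach,second_countable_topology}) set" where
  "L2 M = {f. f \<in> borel_measurable M \<and> integrable M (\<lambda>x. (norm (f x))\<^sup>2)}"

text \<open>Norm in the quotient space L2 modulo a.e.-constant functions: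
  the L2 norm of the centred function f - E f.\<close>
definition cnorm :: "'x measure \<Rightarrow> ('x \<Rightarrow> 'g::{real_inner,banach,second_countable_topology}) \<Rightarrow> real" where
  "cnorm M f = sqrt (\<integral>x. (norm (f x - (\<integral>z. f z \<partial>M)))\<^sup>2 \<partial>M)"

text \<open>The (algebraic) tensor product G \<otimes> H viewed as G-valued functions on the input space:
  finite sums of elementary tensors (g \<otimes> h)(x) = h(x) g, where h(x) = <h, phi x>.\<close>
definition tensor_span :: "('x \<Rightarrow> 'h::real_inner) \<Rightarrow> ('x \<Rightarrow> 'g::real_vector) set" where
  "tensor_span \<phi> = {f. \<exists>n (g::nat \<Rightarrow> 'g) (h::nat \<Rightarrow> 'h). f = (\<lambda>x. \<Sum>i<n. (h i \<bullet> \<phi> x) *\<^sub>R g i)}"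

definition in_closure_mod_const :: "'x measure \<Rightarrow> ('x \<Rightarrow> 'g::{real_inner,banach,second_countable_topology}) set \<Rightarrow> ('x \<Rightarrow> 'g) \<Rightarrow> bool" where
  "in_closure_mod_const M S f \<longleftrightarrow> (\<forall>e>0. \<exists>u\<in>S. cnorm M (\<lambda>x. f x - u x) < e)"

definition dense_mod_const :: "'x measure \<Rightarrow> ('x \<Rightarrow> 'g::{real_inner,banach,second_countable_topology}) set \<Rightarrow> bool" where
  "dense_mod_const M S \<longleftrightarrow> (\<forall>f\<in>L2 M. in_closure_mod_const M S f)"

definition characteristic :: "'x measure \<Rightarrow> ('x \<Rightarrow> 'h::{real_inner,banach,second_countable_topology}) \<Rightarrow> bool" where
  "characteristic MX \<phi> \<longleftrightarrow>
     (\<forall>Q1 Q2. prob_space Q1 \<and> prob_space Q2 \<and> sets Q1 = sets MX \<and> sets Q2 = sets MX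
        \<and> integrable Q1 \<phi> \<and> integrable Q2 \<phi>
        \<and> (\<integral>x. \<phi> x \<partial>Q1) = (\<integral>x. \<phi> x \<partial>Q2) \<longrightarrow> Q1 = Q2)"

end

theory Submission
  imports Defs
begin
lemma inner_phi_meas:
  fixes \<phi> :: "'x \<Rightarrow> 'h::{real_inner,banach,second_countable_topology}"
  assumes H: "closure (span (range \<phi>)) = UNIV"
    and k: "\<And>x'. (\<lambda>x. \<phi> x \<bullet> \<phi> x') \<in> borel_measurable MX"
  shows "(\<lambda>x. h \<bullet> \<phi> x) \<in> borel_measurable MX"
proof -
  have sp: "(\<lambda>x. s \<bullet> \<phi> x) \<in> borel_measurable MX" if "s \<in> span (range \<phi>)" for s
    using that
  proof (induction rule: span_induct_alt)
    case base then show ?case by simp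
  next
    case (step c x y)
    then obtain x' where x': "x = \<phi> x'" by auto
    have "(\<lambda>z. (c *\<^sub>R x + y) \<bullet> \<phi> z) = (\<lambda>z. c * (\<phi> z \<bullet> \<phi> x') + y \<bullet> \<phi> z)"
    proof
      fix z show "(c *\<^sub>R x + y) \<bullet> \<phi> z = c * (\<phi> z \<bullet> \<phi> x') + y \<bullet> \<phi> z"
        unfolding x' inner_add_left inner_scaleR_left by (simp add: inner_commute)
    qed
    then show ?case using step k[of x'] by simp
  qed
  have "h \<in> closure (span (range \<phi>))" using H by simp
  then obtain s where s: "\<And>n. s n \<in> span (range \<phi>)" "s \<longlonglongrightarrow> h"
    by (auto simp: closure_sequential)
  show ?thesis
  proof (rule borel_measurable_LIMSEQ_real[where u="\<lambda>n x. s n \<bullet> \<phi> x"])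
    show "(\<lambda>n. s n \<bullet> \<phi> x) \<longlonglongrightarrow> h \<bullet> \<phi> x" for x
      by (intro tendsto_intros s)
  qed (use sp s in auto)
qed

lemma closed_dense_univ:
  fixes D :: "'a::topological_space set"
  assumes "closed S" "D \<subseteq> S" "\<And>X. open X \<Longrightarrow> X \<noteq> {} \<Longrightarrow> \<exists>d\<in>D. d \<in> X"
  shows "y \<in> S"
proof (rule ccontr)
  assume "y \<notin> S"
  then have "open (- S)" "- S \<noteq> {}" using assms(1) by auto
  then obtain d where "d \<in> D" "d \<in> - S" using assms(3) by blast
  then show False using assms(2) by auto
qed

lemma norm_le_dense:
  fixes w :: "'h::real_inner"
  assumes D: "\<And>X. open X \<Longrightarrow> X \<noteq> {} \<Longrightarrow> \<exists>d\<in>D. d \<in> X" and c: "0 \<le> c"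
  shows "norm w \<le> c \<longleftrightarrow> (\<forall>e\<in>D. \<bar>e \<bullet> w\<bar> \<le> c * norm e)"
proof
  assume "norm w \<le> c"
  then show "\<forall>e\<in>D. \<bar>e \<bullet> w\<bar> \<le> c * norm e"
    by (metis Cauchy_Schwarz_ineq2 mult.commute mult_left_mono norm_ge_zero order_trans)
next
  assume a: "\<forall>e\<in>D. \<bar>e \<bullet> w\<bar> \<le> c * norm e"
  have cl: "closed {e. \<bar>e \<bullet> w\<bar> \<le> c * norm e}"
    by (intro closed_Collect_le continuous_intros)
  have "w \<in> {e. \<bar>e \<bullet> w\<bar> \<le> c * norm e}"
    by (rule closed_dense_univ[OF cl _ D]) (use a in auto)
  then have "norm w * norm w \<le> c * norm w"
    by (simp add: power2_eq_square[symmetric] power2_norm_eq_inner)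
  then show "norm w \<le> c"
  proof (cases "norm w = 0")
    case False
    then have "norm w > 0" by simp
    with \<open>norm w * norm w \<le> c * norm w\<close> show ?thesis by (simp add: mult_le_cancel_right)
  next
    case True
    then show ?thesis using c by simp
  qed
qed

lemma phi_meas:
  fixes \<phi> :: "'x \<Rightarrow> 'h::{real_inner,banach,second_countable_topology}"
  assumes k: "\<And>h. (\<lambda>x. h \<bullet> \<phi> x) \<in> borel_measurable M"
  shows "\<phi> \<in> borel_measurable M"
proof -
  obtain D :: "'h set" where cD: "countable D" and D: "\<And>X. open X \<Longrightarrow> X \<noteq> {} \<Longrightarrow> \<exists>d\<in>D. d \<in> X"
    by (erule countable_dense_setE)
  have dm: "(\<lambda>x. dist (\<phi> x) d) \<in> borel_measurable M" for d
  proof (subst borel_measurable_iff_le, intro allI)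
    fix c :: real
    show "{w \<in> space M. dist (\<phi> w) d \<le> c} \<in> sets M"
    proof (cases "0 \<le> c")
      case False
      have "\<not> dist (\<phi> w) d \<le> c" for w using False zero_le_dist[of "\<phi> w" d] by linarith
      then have "{w \<in> space M. dist (\<phi> w) d \<le> c} = {}" by blast
      then show ?thesis by (metis sets.empty_sets)
    next
      case c: True
    have pw: "dist (\<phi> w) d \<le> c \<longleftrightarrow> (\<forall>e\<in>D. \<bar>e \<bullet> \<phi> w - e \<bullet> d\<bar> \<le> c * norm e)" for w
      using norm_le_dense[OF D c, of "\<phi> w - d"] unfolding dist_norm inner_diff_right .
    have "{w \<in> space M. dist (\<phi> w) d \<le> c} = {w \<in> space M. \<forall>e\<in>D. \<bar>e \<bullet> \<phi> w - e \<bullet> d\<bar> \<le> c * norm e}"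
      using pw by blast
    also have "\<dots> \<in> sets M"
      using cD k by measurable
    finally show "{w \<in> space M. dist (\<phi> w) d \<le> c} \<in> sets M" .
    qed
  qed
  show ?thesis
    unfolding borel_eq_closed
  proof (safe intro!: measurable_measure_of)
    fix A :: "'h set" assume "closed A"
    show "\<phi> -` A \<inter> space M \<in> sets M"
    proof cases
      assume "A \<noteq> {}"
      have eq: "v \<in> A \<longleftrightarrow> (\<forall>n::nat. \<exists>d\<in>{d\<in>D. infdist d A < 1/Suc n}. dist v d < 1/Suc n)" for v
      proof
        assume "v \<in> A"
        show "\<forall>n::nat. \<exists>d\<in>{d\<in>D. infdist d A < 1/Suc n}. dist v d < 1/Suc n"
        proof
          fix n :: nat
          obtain d where "d \<in> D" "d \<in> ball v (1/Suc n)" using D[of "ball v (1/Suc n)"] by auto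
          moreover have "infdist d A \<le> dist d v" using \<open>v \<in> A\<close> by (rule infdist_le)
          ultimately show "\<exists>d\<in>{d\<in>D. infdist d A < 1/Suc n}. dist v d < 1/Suc n"
            by (auto simp: dist_commute)
        qed
      next
        assume a: "\<forall>n::nat. \<exists>d\<in>{d\<in>D. infdist d A < 1/Suc n}. dist v d < 1/Suc n"
        have "infdist v A \<le> 2 / Suc n" for n :: nat
        proof -
          obtain d where "infdist d A < 1/Suc n" "dist v d < 1/Suc n" using a by blast
          moreover have "infdist v A \<le> infdist d A + dist v d" by (rule infdist_triangle)
          ultimately show ?thesis by simp
        qed
        have "infdist v A \<le> 0"
          proof (rule ccontr)
            assume "\<not> infdist v A \<le> 0"
            then have pos: "infdist v A > 0" by simp
            obtain n :: nat where n: "2 / infdist v A < real n" using reals_Archimedean2 by blast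
            have "2 / infdist v A < real (Suc n)" using n by simp
            then have "2 < real (Suc n) * infdist v A" using pos by (simp add: divide_less_eq)
            then have "2 / Suc n < infdist v A"
              by (simp add: divide_less_eq mult.commute)
            with \<open>\<And>n. infdist v A \<le> 2 / Suc n\<close>[of n] show False by simp
          qed
        then have "infdist v A = 0" using infdist_nonneg[of v A] by simp
        then show "v \<in> A" using \<open>closed A\<close> \<open>A \<noteq> {}\<close> by (simp add: in_closed_iff_infdist_zero)
      qed
      have "\<phi> -` A \<inter> space M = {x \<in> space M. \<forall>n::nat. \<exists>d\<in>{d\<in>D. infdist d A < 1/Suc n}. dist (\<phi> x) d < 1/Suc n}"
        using eq by blast
      also have "\<dots> = (\<Inter>n\<in>UNIV. \<Union>d\<in>{d\<in>D. infdist d A < 1/Suc n}. {x\<in>space M. dist (\<phi> x) d < 1/Suc n})"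
        by auto
      also have "\<dots> \<in> sets M"
      proof (rule sets.countable_INT)
        show "(\<lambda>n::nat. \<Union>d\<in>{d\<in>D. infdist d A < 1/Suc n}. {x\<in>space M. dist (\<phi> x) d < 1/Suc n}) ` UNIV \<subseteq> sets M"
        proof (clarify)
          fix n :: nat
          show "(\<Union>d\<in>{d\<in>D. infdist d A < 1/Suc n}. {x\<in>space M. dist (\<phi> x) d < 1/Suc n}) \<in> sets M"
          proof (rule sets.countable_UN'')
            show "countable {d\<in>D. infdist d A < 1/Suc n}" using cD by simp
            fix d show "{x\<in>space M. dist (\<phi> x) d < 1/Suc n} \<in> sets M"
              using dm[of d] by measurable
          qed
        qed
      qed simp
      finally show ?thesis .
    qed simp
  qed auto
qed

definition n2 :: "'x measure \<Rightarrow> ('x \<Rightarrow> 'g::real_inner) \<Rightarrow> real" where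
  "n2 M f = (\<integral>x. (norm (f x))\<^sup>2 \<partial>M)"

definition ip :: "'x measure \<Rightarrow> ('x \<Rightarrow> 'g::real_inner) \<Rightarrow> ('x \<Rightarrow> 'g) \<Rightarrow> real" where
  "ip M f g = (\<integral>x. f x \<bullet> g x \<partial>M)"

lemma norm_add_sq: "(norm (a + b))\<^sup>2 = (norm a)\<^sup>2 + 2 * (a \<bullet> b) + (norm (b::'g::real_inner))\<^sup>2"
  by (simp add: power2_norm_eq_inner inner_add_left inner_add_right inner_commute)

lemma norm_diff_sq: "(norm (a - b))\<^sup>2 = (norm a)\<^sup>2 - 2 * (a \<bullet> b) + (norm (b::'g::real_inner))\<^sup>2"
  by (simp add: power2_norm_eq_inner inner_diff_left inner_diff_right inner_commute)

lemma abs_inner_le_sq: "\<bar>a \<bullet> b\<bar> \<le> (norm a)\<^sup>2 + (norm (b::'g::real_inner))\<^sup>2"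
proof -
  have "\<bar>a \<bullet> b\<bar> \<le> norm a * norm b" by (rule Cauchy_Schwarz_ineq2)
  also have "2 * (norm a * norm b) \<le> (norm a)\<^sup>2 + (norm b)\<^sup>2" using sum_squares_bound[of "norm a" "norm b"] by simp
  then have "norm a * norm b \<le> (norm a)\<^sup>2 + (norm b)\<^sup>2" by (smt (verit) mult_nonneg_nonneg norm_ge_zero)
  finally show ?thesis .
qed

lemma le_one_plus_sq: "(t::real) \<le> 1 + t\<^sup>2"
proof -
  have "0 \<le> (t - 1/2)\<^sup>2" by simp
  also have "(t - 1/2)\<^sup>2 = t\<^sup>2 - t + 1/4" by (simp add: power2_eq_square algebra_simps)
  finally show ?thesis by simp
qed

lemma discr:
  fixes a N E :: real
  assumes h: "\<And>t. 2 * t * a \<le> t\<^sup>2 * N + E" and N: "0 \<le> N"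
  shows "a\<^sup>2 \<le> N * E"
proof (cases "N = 0")
  case True
  have "a = 0"
  proof (rule ccontr)
    assume "a \<noteq> 0"
    have "2 * ((\<bar>E\<bar> + 1) / (2 * a)) * a \<le> E" using h[of "(\<bar>E\<bar> + 1) / (2 * a)"] True by simp
    also have "2 * ((\<bar>E\<bar> + 1) / (2 * a)) * a = \<bar>E\<bar> + 1" using \<open>a \<noteq> 0\<close> by (simp add: field_simps)
    finally show False by simp
  qed
  then show ?thesis using True by simp
next
  case False
  then have Np: "N > 0" using N by simp
  have "2 * (a / N) * a \<le> (a / N)\<^sup>2 * N + E" by (rule h)
  also have "(a / N)\<^sup>2 * N = a\<^sup>2 / N" using Np by (simp add: power2_eq_square field_simps)
  also have "2 * (a / N) * a = 2 * (a\<^sup>2 / N)" by (simp add: power2_eq_square field_simps)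
  finally have "a\<^sup>2 / N \<le> E" by simp
  then show ?thesis using Np by (simp add: divide_le_eq mult.commute)
qed

lemma L2_meas: "f \<in> L2 M \<Longrightarrow> f \<in> borel_measurable M" by (simp add: L2_def)
lemma L2_sq: "f \<in> L2 M \<Longrightarrow> integrable M (\<lambda>x. (norm (f x))\<^sup>2)" by (simp add: L2_def)

lemma L2_inner_int:
  assumes "f \<in> L2 M" "g \<in> L2 M"
  shows "integrable M (\<lambda>x. f x \<bullet> g x)"
proof (rule Bochner_Integration.integrable_bound)
  show "integrable M (\<lambda>x. (norm (f x))\<^sup>2 + (norm (g x))\<^sup>2)"
    by (intro Bochner_Integration.integrable_add L2_sq[OF assms(1)] L2_sq[OF assms(2)])
  show "(\<lambda>x. f x \<bullet> g x) \<in> borel_measurable M" using assms L2_meas by measurable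
  show "AE x in M. norm (f x \<bullet> g x) \<le> norm ((norm (f x))\<^sup>2 + (norm (g x))\<^sup>2)"
    using abs_inner_le_sq by auto
qed

lemma L2_add: assumes "f \<in> L2 M" "g \<in> L2 M" shows "(\<lambda>x. f x + g x) \<in> L2 M"
proof -
  have "integrable M (\<lambda>x. (norm (f x))\<^sup>2 + 2 * (f x \<bullet> g x) + (norm (g x))\<^sup>2)"
    by (intro Bochner_Integration.integrable_add Bochner_Integration.integrable_mult_right L2_sq[OF assms(1)] L2_sq[OF assms(2)] L2_inner_int[OF assms])
  moreover have "(\<lambda>x. f x + g x) \<in> borel_measurable M" using L2_meas[OF assms(1)] L2_meas[OF assms(2)] by measurable
  ultimately show ?thesis unfolding L2_def by (simp add: norm_add_sq)
qed

lemma L2_diff: assumes "f \<in> L2 M" "g \<in> L2 M" shows "(\<lambda>x. f x - g x) \<in> L2 M"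
proof -
  have "integrable M (\<lambda>x. (norm (f x))\<^sup>2 - 2 * (f x \<bullet> g x) + (norm (g x))\<^sup>2)"
    by (intro Bochner_Integration.integrable_add Bochner_Integration.integrable_diff Bochner_Integration.integrable_mult_right L2_sq[OF assms(1)] L2_sq[OF assms(2)] L2_inner_int[OF assms])
  moreover have "(\<lambda>x. f x - g x) \<in> borel_measurable M" using L2_meas[OF assms(1)] L2_meas[OF assms(2)] by measurable
  ultimately show ?thesis unfolding L2_def by (simp add: norm_diff_sq)
qed

lemma L2_scale: assumes "f \<in> L2 M" shows "(\<lambda>x. c *\<^sub>R f x) \<in> L2 M"
proof -
  have "integrable M (\<lambda>x. c\<^sup>2 * (norm (f x))\<^sup>2)"
    by (intro integrable_mult_right L2_sq[OF assms])
  moreover have "(\<lambda>x. c *\<^sub>R f x) \<in> borel_measurable M" using L2_meas[OF assms] by measurable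
  ultimately show ?thesis unfolding L2_def by (simp add: power_mult_distrib)
qed

lemma n2_add: assumes "f \<in> L2 M" "g \<in> L2 M"
  shows "n2 M (\<lambda>x. f x + g x) = n2 M f + 2 * ip M f g + n2 M g"
  unfolding n2_def ip_def norm_add_sq
  using assms by (simp add: L2_sq L2_inner_int)

lemma n2_diff: assumes "f \<in> L2 M" "g \<in> L2 M"
  shows "n2 M (\<lambda>x. f x - g x) = n2 M f - 2 * ip M f g + n2 M g"
  unfolding n2_def ip_def norm_diff_sq
  using assms by (simp add: L2_sq L2_inner_int)

lemma n2_scale: "n2 M (\<lambda>x. c *\<^sub>R f x) = c\<^sup>2 * n2 M f"
  unfolding n2_def by (simp add: power_mult_distrib)

lemma n2_nonneg: "0 \<le> n2 M f" unfolding n2_def by simp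

lemma ip_scale_right: "ip M f (\<lambda>x. c *\<^sub>R g x) = c * ip M f g"
  unfolding ip_def by simp

lemma ip_commute: "ip M f g = ip M g f"
  unfolding ip_def by (simp add: inner_commute)

lemma ip_diff_left: assumes "f \<in> L2 M" "g \<in> L2 M" "h \<in> L2 M"
  shows "ip M (\<lambda>x. f x - g x) h = ip M f h - ip M g h"
  unfolding ip_def inner_diff_left using assms by (simp add: L2_inner_int)

lemma CS_L2: assumes "f \<in> L2 M" "g \<in> L2 M"
  shows "(ip M f g)\<^sup>2 \<le> n2 M g * n2 M f"
proof (rule discr)
  fix t
  have "0 \<le> n2 M (\<lambda>x. f x - t *\<^sub>R g x)" by (rule n2_nonneg)
  also have "\<dots> = n2 M f - 2 * (t * ip M f g) + t\<^sup>2 * n2 M g"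
    using assms by (simp add: n2_diff L2_scale ip_scale_right n2_scale)
  finally show "2 * t * ip M f g \<le> t\<^sup>2 * n2 M g + n2 M f" by simp
qed (rule n2_nonneg)

lemma abs_ip_le: assumes "f \<in> L2 M" "g \<in> L2 M"
  shows "\<bar>ip M f g\<bar> \<le> sqrt (n2 M f) * sqrt (n2 M g)"
proof -
  have "\<bar>ip M f g\<bar> = sqrt ((ip M f g)\<^sup>2)" by simp
  also have "\<dots> \<le> sqrt (n2 M g * n2 M f)" using CS_L2[OF assms] by (rule real_sqrt_le_mono)
  finally show ?thesis by (simp add: real_sqrt_mult mult.commute)
qed

lemma minkowski: assumes "f \<in> L2 M" "g \<in> L2 M"
  shows "sqrt (n2 M (\<lambda>x. f x + g x)) \<le> sqrt (n2 M f) + sqrt (n2 M g)"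
proof -
  have "n2 M (\<lambda>x. f x + g x) \<le> n2 M f + 2 * (sqrt (n2 M f) * sqrt (n2 M g)) + n2 M g"
    using n2_add[OF assms] abs_ip_le[OF assms] by linarith
  also have "\<dots> = (sqrt (n2 M f) + sqrt (n2 M g))\<^sup>2"
    by (simp add: power2_eq_square algebra_simps n2_nonneg)
  finally have "sqrt (n2 M (\<lambda>x. f x + g x)) \<le> sqrt ((sqrt (n2 M f) + sqrt (n2 M g))\<^sup>2)"
    by (rule real_sqrt_le_mono)
  then show ?thesis using n2_nonneg[of M f] n2_nonneg[of M g] by simp
qed

context prob_space begin

lemma L2_integrable: assumes "f \<in> L2 M" shows "integrable M f"
proof (rule Bochner_Integration.integrable_bound)
  show "integrable M (\<lambda>x. 1 + (norm (f x))\<^sup>2)"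
    by (intro Bochner_Integration.integrable_add integrable_const L2_sq[OF assms])
  show "f \<in> borel_measurable M" using assms by (rule L2_meas)
  show "AE x in M. norm (f x) \<le> norm (1 + (norm (f x))\<^sup>2)"
    using le_one_plus_sq by (auto intro: order_trans[OF _ abs_ge_self])
qed

lemma L2_const: "(\<lambda>x. c) \<in> L2 M"
  unfolding L2_def by auto

lemma L1_le_L2: assumes "g \<in> L2 M"
  shows "(\<integral>x. norm (g x) \<partial>M)\<^sup>2 \<le> n2 M g"
proof -
  let ?m = "\<integral>x. norm (g x) \<partial>M"
  have ig: "integrable M (\<lambda>x. norm (g x))" using L2_integrable[OF assms] by simp
  have "0 \<le> (\<integral>x. (norm (g x) - ?m)\<^sup>2 \<partial>M)" by simp
  also have "(\<lambda>x. (norm (g x) - ?m)\<^sup>2) = (\<lambda>x. (norm (g x))\<^sup>2 - 2 * ?m * norm (g x) + ?m\<^sup>2)"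
    by (simp add: power2_eq_square algebra_simps)
  also have "(\<integral>x. (norm (g x))\<^sup>2 - 2 * ?m * norm (g x) + ?m\<^sup>2 \<partial>M) = n2 M g - 2 * ?m * ?m + ?m\<^sup>2"
    using ig L2_sq[OF assms] by (simp add: n2_def prob_space)
  finally show ?thesis by (simp add: power2_eq_square)
qed

end

lemma half_pow_sq: "((1/2::real)^k)\<^sup>2 = (1/4)^k"
  by (simp add: power2_eq_square flip: power_mult_distrib)

context prob_space begin

lemma L2_complete:
  fixes r :: "nat \<Rightarrow> 'a \<Rightarrow> 'g::{real_inner,banach,second_countable_topology}"
  assumes r: "\<And>n. r n \<in> L2 M" and C: "0 \<le> C"
    and dr: "\<And>n. n2 M (\<lambda>x. r n x - r (Suc n) x) \<le> C * (1/4)^n"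
  shows "\<exists>w\<in>L2 M. (\<lambda>n. n2 M (\<lambda>x. r n x - w x)) \<longlonglongrightarrow> 0"
proof -
  define s where "s k x = norm (r k x - r (Suc k) x)" for k x
  have rm[measurable]: "r n \<in> borel_measurable M" for n using r L2_meas by blast
  have sL2: "(\<lambda>x. r k x - r (Suc k) x) \<in> L2 M" for k by (intro L2_diff r)
  have sm[measurable]: "s k \<in> borel_measurable M" for k unfolding s_def by measurable
  have sint: "integrable M (s k)" for k unfolding s_def using L2_integrable[OF sL2] by simp
  have sq: "sqrt (C * (1/4)^k) = sqrt C * (1/2)^k" for k
    by (simp add: real_sqrt_mult flip: half_pow_sq)
  have sqd: "sqrt (n2 M (\<lambda>x. r k x - r (Suc k) x)) \<le> sqrt C * (1/2)^k" for k
    using real_sqrt_le_mono[OF dr[of k]] sq by simp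
  have ints: "(\<integral>x. s k x \<partial>M) \<le> sqrt C * (1/2)^k" for k
  proof -
    have "(\<integral>x. s k x \<partial>M)\<^sup>2 \<le> n2 M (\<lambda>x. r k x - r (Suc k) x)"
      unfolding s_def by (rule L1_le_L2[OF sL2])
    then have "sqrt ((\<integral>x. s k x \<partial>M)\<^sup>2) \<le> sqrt (n2 M (\<lambda>x. r k x - r (Suc k) x))"
      by (rule real_sqrt_le_mono)
    moreover have "0 \<le> (\<integral>x. s k x \<partial>M)" unfolding s_def by simp
    ultimately show ?thesis using sqd[of k] by simp
  qed
  have ints0: "0 \<le> (\<integral>x. s k x \<partial>M)" for k unfolding s_def by simp
  have summ: "summable (\<lambda>k. \<integral>x. s k x \<partial>M)"
  proof (rule summable_comparison_test')
    show "summable (\<lambda>k. sqrt C * (1/2::real)^k)"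
      by (intro summable_mult summable_geometric) simp
    show "norm (\<integral>x. s k x \<partial>M) \<le> sqrt C * (1/2)^k" for k using ints[of k] ints0[of k] by simp
  qed
  have nn: "(\<integral>\<^sup>+x. ennreal (s k x) \<partial>M) = ennreal (\<integral>x. s k x \<partial>M)" for k
    by (rule nn_integral_eq_integral[OF sint]) (simp add: s_def)
  have "(\<integral>\<^sup>+x. (\<Sum>k. ennreal (s k x)) \<partial>M) = (\<Sum>k. ennreal (\<integral>x. s k x \<partial>M))"
    by (subst nn_integral_suminf) (auto simp: nn)
  also have "\<dots> \<noteq> \<top>" using summ ints0 by (rule ennreal_suminf_neq_top)
  finally have "AE x in M. (\<Sum>k. ennreal (s k x)) \<noteq> \<infinity>"
    by (intro nn_integral_PInf_AE) auto
  then have AEc: "AE x in M. convergent (\<lambda>n. r n x)"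
  proof eventually_elim
    case (elim x)
    have "summable (\<lambda>k. s k x)"
      using elim by (intro summable_suminf_not_top) (auto simp: s_def)
    then have sm: "summable (\<lambda>k. r k x - r (Suc k) x)"
      unfolding s_def by (rule summable_norm_cancel)
    have "(\<lambda>n. r 0 x - (\<Sum>k<n. r k x - r (Suc k) x)) \<longlonglongrightarrow> r 0 x - (\<Sum>k. r k x - r (Suc k) x)"
      by (intro tendsto_intros summable_LIMSEQ sm)
    moreover have "(\<lambda>n. r 0 x - (\<Sum>k<n. r k x - r (Suc k) x)) = (\<lambda>n. r n x)"
    proof
      fix n
      have "(\<Sum>k<n. r k x - r (Suc k) x) = r 0 x - r n x" by (induction n) simp_all
      then show "r 0 x - (\<Sum>k<n. r k x - r (Suc k) x) = r n x" by simp
    qed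
    ultimately show ?case by (auto simp: convergent_def)
  qed
  define w where "w x = lim (\<lambda>n. r n x)" for x
  have wm[measurable]: "w \<in> borel_measurable M" unfolding w_def by measurable
  have AEl: "AE x in M. (\<lambda>n. r n x) \<longlonglongrightarrow> w x"
    using AEc by eventually_elim (simp add: w_def convergent_LIMSEQ_iff)
  have chain: "sqrt (n2 M (\<lambda>x. r n x - r (n + j) x)) \<le> 2 * sqrt C * (1/2)^n * (1 - (1/2)^j)" for n j
  proof (induction j)
    case 0 then show ?case by (simp add: n2_def)
  next
    case (Suc j)
    have eq: "(\<lambda>x. r n x - r (n + Suc j) x) = (\<lambda>x. (r n x - r (n + j) x) + (r (n + j) x - r (Suc (n + j)) x))"
      by auto
    have "sqrt (n2 M (\<lambda>x. r n x - r (n + Suc j) x)) \<le> sqrt (n2 M (\<lambda>x. r n x - r (n + j) x)) + sqrt (n2 M (\<lambda>x. r (n + j) x - r (Suc (n + j)) x))"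
      unfolding eq by (intro minkowski L2_diff r)
    also have "\<dots> \<le> 2 * sqrt C * (1/2)^n * (1 - (1/2)^j) + sqrt C * (1/2)^(n + j)"
      using Suc sqd[of "n + j"] by simp
    also have "\<dots> = 2 * sqrt C * (1/2)^n * (1 - (1/2)^Suc j)"
    proof -
      have e1: "(1/2::real)^(n+j) = (1/2)^n * (1/2)^j" by (rule power_add)
      have e2: "(1/2::real)^Suc j = (1/2)^j * (1/2)" by simp
      show ?thesis unfolding e1 e2 by algebra
    qed
    finally show ?case .
  qed
  define B where "B n = 4 * C * (1/4::real)^n" for n
  have Bnn: "0 \<le> B n" for n unfolding B_def using C by (intro mult_nonneg_nonneg) simp_all
  have chainB: "n2 M (\<lambda>x. r n x - r m x) \<le> B n" if nm: "n \<le> m" for n m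
  proof -
    obtain j where m: "m = n + j" using le_Suc_ex[OF nm] by blast
    have "sqrt (n2 M (\<lambda>x. r n x - r m x)) \<le> 2 * sqrt C * (1/2)^n"
    proof -
      have "1 - (1/2::real)^j \<le> 1" by simp
      moreover have "0 \<le> 2 * sqrt C * (1/2::real)^n" using C by simp
      ultimately have "2 * sqrt C * (1/2)^n * (1 - (1/2)^j) \<le> 2 * sqrt C * (1/2::real)^n * 1"
        by (rule mult_left_mono)
      then show ?thesis using chain[of n j] unfolding m by simp
    qed
    then have "(sqrt (n2 M (\<lambda>x. r n x - r m x)))\<^sup>2 \<le> (2 * sqrt C * (1/2)^n)\<^sup>2"
      by (rule power_mono[OF _ real_sqrt_ge_zero[OF n2_nonneg]])
    also have "(2 * sqrt C * (1/2)^n)\<^sup>2 = B n"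
      using C by (simp add: B_def power_mult_distrib half_pow_sq)
    finally show ?thesis using n2_nonneg[of M "\<lambda>x. r n x - r m x"] by simp
  qed
  have fatou: "(\<integral>\<^sup>+x. ennreal ((norm (r n x - w x))\<^sup>2) \<partial>M) \<le> ennreal (B n)" for n
  proof -
    have "(\<integral>\<^sup>+x. ennreal ((norm (r n x - w x))\<^sup>2) \<partial>M)
        = (\<integral>\<^sup>+x. liminf (\<lambda>m. ennreal ((norm (r n x - r m x))\<^sup>2)) \<partial>M)"
    proof (rule nn_integral_cong_AE)
      show "AE x in M. ennreal ((norm (r n x - w x))\<^sup>2) = liminf (\<lambda>m. ennreal ((norm (r n x - r m x))\<^sup>2))"
        using AEl
      proof eventually_elim
        case (elim x)
        have "(\<lambda>m. ennreal ((norm (r n x - r m x))\<^sup>2)) \<longlonglongrightarrow> ennreal ((norm (r n x - w x))\<^sup>2)"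
          by (intro tendsto_ennrealI tendsto_intros elim)
        from lim_imp_Liminf[OF trivial_limit_sequentially this] show ?case by (rule sym)
      qed
    qed
    also have "\<dots> \<le> liminf (\<lambda>m. \<integral>\<^sup>+x. ennreal ((norm (r n x - r m x))\<^sup>2) \<partial>M)"
      by (intro nn_integral_liminf) measurable
    also have "\<dots> = liminf (\<lambda>m. ennreal (n2 M (\<lambda>x. r n x - r m x)))"
      unfolding n2_def using L2_sq[OF L2_diff[OF r r]]
      by (subst nn_integral_eq_integral) auto
    also have "\<dots> \<le> limsup (\<lambda>m. ennreal (n2 M (\<lambda>x. r n x - r m x)))"
      by (rule Liminf_le_Limsup) simp
    also have "\<dots> \<le> ennreal (B n)"
    proof (rule Limsup_bounded)
      show "\<forall>\<^sub>F m in sequentially. ennreal (n2 M (\<lambda>x. r n x - r m x)) \<le> ennreal (B n)"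
        using eventually_ge_at_top[of n] by eventually_elim (use chainB in \<open>auto intro: ennreal_leI\<close>)
    qed
    finally show ?thesis .
  qed
  have dL2: "(\<lambda>x. r n x - w x) \<in> L2 M" for n
  proof -
    have "integrable M (\<lambda>x. (norm (r n x - w x))\<^sup>2)"
    proof (rule integrableI_bounded)
      show "(\<integral>\<^sup>+x. ennreal (norm ((norm (r n x - w x))\<^sup>2)) \<partial>M) < \<infinity>"
        using le_less_trans[OF fatou[of n] ennreal_less_top] by simp
    qed measurable
    then show ?thesis unfolding L2_def by auto
  qed
  have weq: "(\<lambda>x. r 0 x - (r 0 x - w x)) = w" by auto
  have wL2: "w \<in> L2 M"
    using L2_diff[OF r dL2, of 0 0] unfolding weq .
  have bound: "n2 M (\<lambda>x. r n x - w x) \<le> B n" for n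
  proof -
    have "ennreal (n2 M (\<lambda>x. r n x - w x)) = (\<integral>\<^sup>+x. ennreal ((norm (r n x - w x))\<^sup>2) \<partial>M)"
      unfolding n2_def using L2_sq[OF dL2[of n]] by (subst nn_integral_eq_integral) auto
    then have "ennreal (n2 M (\<lambda>x. r n x - w x)) \<le> ennreal (B n)" using fatou[of n] by (rule ord_eq_le_trans)
    then show ?thesis using ennreal_le_iff[OF Bnn[of n]] by blast
  qed
  have q: "(\<lambda>n. (1/4::real)^n) \<longlonglongrightarrow> 0" by (rule LIMSEQ_power_zero) simp
  have Bt: "B \<longlonglongrightarrow> 0"
    unfolding B_def using tendsto_mult_right_zero[OF q, of "4 * C"] .
  have e1: "\<forall>\<^sub>F n in sequentially. 0 \<le> n2 M (\<lambda>x. r n x - w x)" by (simp add: n2_nonneg)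
  have e2: "\<forall>\<^sub>F n in sequentially. n2 M (\<lambda>x. r n x - w x) \<le> B n" by (simp add: bound)
  have "(\<lambda>n. n2 M (\<lambda>x. r n x - w x)) \<longlonglongrightarrow> 0"
    by (rule real_tendsto_sandwich[OF e1 e2 tendsto_const Bt])
  then show ?thesis using wL2 by blast
qed

end

context prob_space begin

lemma proj_L2:
  fixes F :: "'a \<Rightarrow> 'g::{real_inner,banach,second_countable_topology}" and T :: "('a \<Rightarrow> 'g) set"
  assumes F: "F \<in> L2 M" and TL2: "T \<subseteq> L2 M" and T0: "(\<lambda>x. 0) \<in> T"
    and Tlin: "\<And>u v a b. u \<in> T \<Longrightarrow> v \<in> T \<Longrightarrow> (\<lambda>x. a *\<^sub>R u x + b *\<^sub>R v x) \<in> T"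
  shows "\<exists>w\<in>L2 M. (\<forall>v\<in>T. ip M w v = 0) \<and>
           ((AE x in M. w x = 0) \<longrightarrow> (\<forall>e>0. \<exists>v\<in>T. n2 M (\<lambda>x. F x - v x) < e))"
proof -
  define V where "V = (\<lambda>v. n2 M (\<lambda>x. F x - v x)) ` T"
  define d2 where "d2 = Inf V"
  have Vne: "V \<noteq> {}" using T0 by (auto simp: V_def)
  have bdd: "bdd_below V" unfolding V_def by (rule bdd_belowI[of _ 0]) (auto intro: n2_nonneg)
  have lower: "d2 \<le> n2 M (\<lambda>x. F x - v x)" if "v \<in> T" for v
    unfolding d2_def V_def using bdd that by (intro cInf_lower) (auto simp: V_def)
  define q where "q = (1/4::real)"
  have q0: "0 < q" by (simp add: q_def)
  have "\<exists>v\<in>T. n2 M (\<lambda>x. F x - v x) < d2 + q^n" for n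
  proof -
    have "Inf V < d2 + q^n" using q0 by (simp add: d2_def)
    from cInf_lessD[OF Vne this] show ?thesis by (auto simp: V_def)
  qed
  then obtain vs where vsT: "\<And>n. vs n \<in> T" and vsb: "\<And>n. n2 M (\<lambda>x. F x - vs n x) < d2 + q^n"
    by metis
  have vsL2: "vs n \<in> L2 M" for n using vsT TL2 by auto
  define r where "r n = (\<lambda>x. F x - vs n x)" for n
  have rL2: "r n \<in> L2 M" for n unfolding r_def by (intro L2_diff F vsL2)
  have dr: "n2 M (\<lambda>x. r n x - r (Suc n) x) \<le> 4 * (1/4)^n" for n
  proof -
    define m where "m = (\<lambda>x. (1/2::real) *\<^sub>R vs n x + (1/2::real) *\<^sub>R vs (Suc n) x)"
    have mT: "m \<in> T" unfolding m_def by (intro Tlin vsT)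
    have sum_eq: "(\<lambda>x. r n x + r (Suc n) x) = (\<lambda>x. 2 *\<^sub>R (F x - m x))"
      by (auto simp: r_def m_def algebra_simps scaleR_add_right scaleR_2)
    have "n2 M (\<lambda>x. r n x + r (Suc n) x) = 4 * n2 M (\<lambda>x. F x - m x)"
      unfolding sum_eq n2_scale by simp
    also have "\<dots> \<ge> 4 * d2" using lower[OF mT] by simp
    finally have s4: "4 * d2 \<le> n2 M (\<lambda>x. r n x + r (Suc n) x)" .
    have par: "n2 M (\<lambda>x. r n x - r (Suc n) x) + n2 M (\<lambda>x. r n x + r (Suc n) x) = 2 * n2 M (r n) + 2 * n2 M (r (Suc n))"
      using n2_diff[OF rL2 rL2, of n "Suc n"] n2_add[OF rL2 rL2, of n "Suc n"] by simp
    have b1: "n2 M (r n) < d2 + q^n" using vsb[of n] by (simp add: r_def)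
    have b2: "n2 M (r (Suc n)) < d2 + q^Suc n" using vsb[of "Suc n"] by (simp add: r_def)
    have "q^Suc n \<le> q^n" using q0 by (simp add: q_def power_decreasing_iff)
    then have "n2 M (\<lambda>x. r n x - r (Suc n) x) \<le> 4 * q^n"
      using par s4 b1 b2 by linarith
    then show ?thesis by (simp add: q_def)
  qed
  obtain w where wL2: "w \<in> L2 M" and wlim: "(\<lambda>n. n2 M (\<lambda>x. r n x - w x)) \<longlonglongrightarrow> 0"
    using L2_complete[OF rL2 _ dr] by auto
  have orth: "ip M w v = 0" if vT: "v \<in> T" for v
  proof -
    have vL2: "v \<in> L2 M" using vT TL2 by auto
    have a: "(ip M (r n) v)\<^sup>2 \<le> n2 M v * q^n" for n
    proof (rule discr)
      fix t
      have "(\<lambda>x. 1 *\<^sub>R vs n x + t *\<^sub>R v x) \<in> T" by (intro Tlin vsT vT)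
      then have "d2 \<le> n2 M (\<lambda>x. F x - (1 *\<^sub>R vs n x + t *\<^sub>R v x))" by (rule lower)
      also have "(\<lambda>x. F x - (1 *\<^sub>R vs n x + t *\<^sub>R v x)) = (\<lambda>x. r n x - t *\<^sub>R v x)"
        by (auto simp: r_def)
      also have "n2 M (\<lambda>x. r n x - t *\<^sub>R v x) = n2 M (r n) - 2 * (t * ip M (r n) v) + t\<^sup>2 * n2 M v"
        using rL2 vL2 by (simp add: n2_diff L2_scale ip_scale_right n2_scale)
      finally have "d2 \<le> n2 M (r n) - 2 * (t * ip M (r n) v) + t\<^sup>2 * n2 M v" .
      moreover have "n2 M (r n) < d2 + q^n" using vsb[of n] by (simp add: r_def)
      ultimately show "2 * t * ip M (r n) v \<le> t\<^sup>2 * n2 M v + q^n" by linarith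
    qed (rule n2_nonneg)
    have bnd: "\<bar>ip M w v\<bar> \<le> sqrt (n2 M v * q^n) + sqrt (n2 M (\<lambda>x. r n x - w x)) * sqrt (n2 M v)" for n
    proof -
      have "ip M (\<lambda>x. r n x - w x) v = ip M (r n) v - ip M w v"
        using ip_diff_left[OF rL2 wL2 vL2] by simp
      then have "\<bar>ip M w v\<bar> \<le> \<bar>ip M (r n) v\<bar> + \<bar>ip M (\<lambda>x. r n x - w x) v\<bar>" by linarith
      also have "\<bar>ip M (r n) v\<bar> \<le> sqrt (n2 M v * q^n)"
        using real_sqrt_le_mono[OF a[of n]] by simp
      also have "\<bar>ip M (\<lambda>x. r n x - w x) v\<bar> \<le> sqrt (n2 M (\<lambda>x. r n x - w x)) * sqrt (n2 M v)"
        by (intro abs_ip_le L2_diff rL2 wL2 vL2)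
      finally show ?thesis by simp
    qed
    have qz: "(\<lambda>n. q^n) \<longlonglongrightarrow> 0" by (rule LIMSEQ_power_zero) (simp add: q_def)
    have "(\<lambda>n. sqrt (n2 M v * q^n) + sqrt (n2 M (\<lambda>x. r n x - w x)) * sqrt (n2 M v))
          \<longlonglongrightarrow> sqrt (n2 M v * 0) + sqrt 0 * sqrt (n2 M v)"
      by (intro tendsto_intros qz wlim)
    then have lim0: "(\<lambda>n. sqrt (n2 M v * q^n) + sqrt (n2 M (\<lambda>x. r n x - w x)) * sqrt (n2 M v)) \<longlonglongrightarrow> 0"
      by simp
    have "\<bar>ip M w v\<bar> \<le> 0"
      by (rule LIMSEQ_le_const[OF lim0]) (use bnd in blast)
    then show ?thesis by simp
  qed
  have fin: "\<forall>e>0. \<exists>v\<in>T. n2 M (\<lambda>x. F x - v x) < e" if AE0: "AE x in M. w x = 0"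
  proof (intro allI impI)
    fix e :: real assume "0 < e"
    have eq: "n2 M (\<lambda>x. r n x - w x) = n2 M (r n)" for n
    proof -
      have [measurable]: "r n \<in> borel_measurable M" "w \<in> borel_measurable M" using rL2 wL2 L2_meas by auto
      show ?thesis unfolding n2_def by (rule integral_cong_AE) (use AE0 in \<open>auto elim!: eventually_mono\<close>)
    qed
    have "(\<lambda>n. n2 M (r n)) \<longlonglongrightarrow> 0" using wlim unfolding eq .
    from order_tendstoD(2)[OF this \<open>0 < e\<close>] obtain n where "n2 M (r n) < e"
      by (auto simp: eventually_sequentially)
    then show "\<exists>v\<in>T. n2 M (\<lambda>x. F x - v x) < e" using vsT by (auto simp: r_def)
  qed
  show ?thesis using wL2 orth fin by blast
qed

end

lemma int_sR:
  fixes \<phi> :: "'x \<Rightarrow> 'h::{banach,second_countable_topology}"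
  assumes I: "integrable M (\<lambda>x. (z x)\<^sup>2 + (norm (\<phi> x))\<^sup>2)"
    and ym: "y \<in> borel_measurable M" and \<phi>m: "\<phi> \<in> borel_measurable M"
    and yb: "\<And>x. \<bar>y x\<bar> \<le> k * \<bar>z x\<bar>" and k: "0 \<le> k"
  shows "integrable M (\<lambda>x. y x *\<^sub>R \<phi> x)"
proof (rule Bochner_Integration.integrable_bound)
  show "integrable M (\<lambda>x. k * ((z x)\<^sup>2 + (norm (\<phi> x))\<^sup>2))"
    using I by (rule Bochner_Integration.integrable_mult_right)
  show "(\<lambda>x. y x *\<^sub>R \<phi> x) \<in> borel_measurable M" using ym \<phi>m by measurable
  show "AE x in M. norm (y x *\<^sub>R \<phi> x) \<le> norm (k * ((z x)\<^sup>2 + (norm (\<phi> x))\<^sup>2))"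
  proof (intro AE_I2)
    fix x
    have "norm (y x *\<^sub>R \<phi> x) = \<bar>y x\<bar> * norm (\<phi> x)" by simp
    also have "\<dots> \<le> k * \<bar>z x\<bar> * norm (\<phi> x)" using yb[of x] by (intro mult_right_mono) auto
    also have "\<bar>z x\<bar> * norm (\<phi> x) \<le> (z x)\<^sup>2 + (norm (\<phi> x))\<^sup>2"
    proof -
      have "2 * (\<bar>z x\<bar> * norm (\<phi> x)) \<le> (z x)\<^sup>2 + (norm (\<phi> x))\<^sup>2"
        using sum_squares_bound[of "\<bar>z x\<bar>" "norm (\<phi> x)"] by (simp add: mult.assoc)
      moreover have "0 \<le> \<bar>z x\<bar> * norm (\<phi> x)" by simp
      ultimately show ?thesis by linarith
    qed
    then have "k * \<bar>z x\<bar> * norm (\<phi> x) \<le> k * ((z x)\<^sup>2 + (norm (\<phi> x))\<^sup>2)"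
      using k by (simp add: mult.assoc mult_left_mono)
    also have "\<dots> \<le> norm (k * ((z x)\<^sup>2 + (norm (\<phi> x))\<^sup>2))" by simp
    finally show "norm (y x *\<^sub>R \<phi> x) \<le> norm (k * ((z x)\<^sup>2 + (norm (\<phi> x))\<^sup>2))" .
  qed
qed

lemma char_zero:
  fixes \<phi> :: "'x \<Rightarrow> 'h::{real_inner,banach,second_countable_topology}" and z :: "'x \<Rightarrow> real"
  assumes M: "prob_space M" and sets: "sets M = sets MX"
    and \<phi>m[measurable]: "\<phi> \<in> borel_measurable M" and \<phi>2: "integrable M (\<lambda>x. (norm (\<phi> x))\<^sup>2)"
    and char: "characteristic MX \<phi>"
    and zL2: "z \<in> L2 M"
    and z0: "(\<integral>x. z x \<partial>M) = 0"
    and zh: "\<And>h. (\<integral>x. z x * (h \<bullet> \<phi> x) \<partial>M) = 0"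
  shows "AE x in M. z x = 0"
proof -
  interpret prob_space M by (rule M)
  have zm[measurable]: "z \<in> borel_measurable M" using zL2 by (rule L2_meas)
  have zi: "integrable M z" using zL2 by (rule L2_integrable)
  have I: "integrable M (\<lambda>x. (z x)\<^sup>2 + (norm (\<phi> x))\<^sup>2)"
    using L2_sq[OF zL2] \<phi>2 by (intro Bochner_Integration.integrable_add) auto
  define p where "p x = max 0 (z x)" for x
  define n where "n x = max 0 (- z x)" for x
  have pm[measurable]: "p \<in> borel_measurable M" unfolding p_def by measurable
  have nm[measurable]: "n \<in> borel_measurable M" unfolding n_def by measurable
  have pi: "integrable M p" unfolding p_def using zi by (intro Bochner_Integration.integrable_max) auto
  have ni: "integrable M n" unfolding n_def using zi by (intro Bochner_Integration.integrable_max) auto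
  have pn: "z x = p x - n x" for x by (simp add: p_def n_def max_def)
  have p0: "0 \<le> p x" "0 \<le> n x" for x by (simp_all add: p_def n_def)
  define c where "c = (\<integral>x. p x \<partial>M)"
  have c0: "0 \<le> c" unfolding c_def using p0 by simp
  have cn: "(\<integral>x. n x \<partial>M) = c"
  proof -
    have "(\<integral>x. z x \<partial>M) = (\<integral>x. p x \<partial>M) - (\<integral>x. n x \<partial>M)"
      unfolding pn using pi ni by simp
    then show ?thesis using z0 by (simp add: c_def)
  qed
  have zphi: "integrable M (\<lambda>x. z x *\<^sub>R \<phi> x)"
    by (rule int_sR[OF I zm \<phi>m, of 1]) auto
  define V where "V = (\<integral>x. z x *\<^sub>R \<phi> x \<partial>M)"
  have "(\<integral>x. (z x *\<^sub>R \<phi> x) \<bullet> V \<partial>M) = (\<integral>x. z x *\<^sub>R \<phi> x \<partial>M) \<bullet> V"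
    by (rule integral_inner_left) (use zphi in simp)
  then have "V \<bullet> V = (\<integral>x. (z x *\<^sub>R \<phi> x) \<bullet> V \<partial>M)"
    unfolding V_def[symmetric] by simp
  also have "(\<integral>x. (z x *\<^sub>R \<phi> x) \<bullet> V \<partial>M) = (\<integral>x. z x * (V \<bullet> \<phi> x) \<partial>M)" by (simp add: inner_commute)
  also have "\<dots> = 0" by (rule zh)
  finally have V0: "V = 0" by simp
  show ?thesis
  proof (cases "c = 0")
    case True
    have "AE x in M. p x = 0" using integral_nonneg_eq_0_iff_AE[OF pi] True p0 by (simp add: c_def)
    moreover have "AE x in M. n x = 0" using integral_nonneg_eq_0_iff_AE[OF ni] True cn p0 by simp
    ultimately show ?thesis by eventually_elim (simp add: pn)
  next
    case False
    then have cpos: "0 < c" using c0 by simp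
    define Q1 where "Q1 = density M (\<lambda>x. ennreal (p x / c))"
    define Q2 where "Q2 = density M (\<lambda>x. ennreal (n x / c))"
    have ps: "prob_space (density M (\<lambda>x. ennreal (f x / c)))"
      if fm: "f \<in> borel_measurable M" and fi: "integrable M f" and f0: "\<And>x. 0 \<le> f x" and fc: "(\<integral>x. f x \<partial>M) = c" for f
    proof (rule prob_spaceI)
      have "emeasure (density M (\<lambda>x. ennreal (f x / c))) (space (density M (\<lambda>x. ennreal (f x / c))))
          = (\<integral>\<^sup>+x. ennreal (f x / c) * indicator (space M) x \<partial>M)"
        using fm by (simp add: emeasure_density)
      also have "\<dots> = (\<integral>\<^sup>+x. ennreal (f x / c) \<partial>M)"
        by (intro nn_integral_cong) (simp split: split_indicator)
      also have "\<dots> = ennreal (\<integral>x. f x / c \<partial>M)"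
        using fi f0 cpos by (intro nn_integral_eq_integral) (auto intro: integrable_divide)
      also have "(\<integral>x. f x / c \<partial>M) = 1" using fc cpos by simp
      finally show "emeasure (density M (\<lambda>x. ennreal (f x / c))) (space (density M (\<lambda>x. ennreal (f x / c)))) = 1"
        by simp
    qed
    have Q1p: "prob_space Q1" unfolding Q1_def by (rule ps[OF pm pi p0(1)]) (simp add: c_def)
    have Q2p: "prob_space Q2" unfolding Q2_def by (rule ps[OF nm ni p0(2) cn])
    have sQ: "sets Q1 = sets MX" "sets Q2 = sets MX" unfolding Q1_def Q2_def by (simp_all add: sets)
    have divm: "(\<lambda>x. f x / c) \<in> borel_measurable M" if "f \<in> borel_measurable M" for f
      using that by measurable
    have pint: "integrable M (\<lambda>x. (p x / c) *\<^sub>R \<phi> x)"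
      by (rule int_sR[OF I divm[OF pm] \<phi>m, of "1/c"]) (use cpos in \<open>auto simp: p_def divide_le_cancel\<close>)
    have nint: "integrable M (\<lambda>x. (n x / c) *\<^sub>R \<phi> x)"
      by (rule int_sR[OF I divm[OF nm] \<phi>m, of "1/c"]) (use cpos in \<open>auto simp: n_def divide_le_cancel\<close>)
    have i1: "integrable Q1 \<phi>" unfolding Q1_def
      using pint by (subst integrable_density) (auto intro!: divm simp: p0 cpos less_imp_le)
    have i2: "integrable Q2 \<phi>" unfolding Q2_def
      using nint by (subst integrable_density) (auto intro!: divm simp: p0 cpos less_imp_le)
    have e1: "(\<integral>x. \<phi> x \<partial>Q1) = (\<integral>x. (p x / c) *\<^sub>R \<phi> x \<partial>M)" unfolding Q1_def
      by (subst integral_density) (auto intro!: divm simp: p0 cpos less_imp_le)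
    have e2: "(\<integral>x. \<phi> x \<partial>Q2) = (\<integral>x. (n x / c) *\<^sub>R \<phi> x \<partial>M)" unfolding Q2_def
      by (subst integral_density) (auto intro!: divm simp: p0 cpos less_imp_le)
    have "(\<integral>x. (p x / c) *\<^sub>R \<phi> x \<partial>M) - (\<integral>x. (n x / c) *\<^sub>R \<phi> x \<partial>M)
        = (\<integral>x. (p x / c) *\<^sub>R \<phi> x - (n x / c) *\<^sub>R \<phi> x \<partial>M)"
      using pint nint by simp
    also have "(\<lambda>x. (p x / c) *\<^sub>R \<phi> x - (n x / c) *\<^sub>R \<phi> x) = (\<lambda>x. (1/c) *\<^sub>R (z x *\<^sub>R \<phi> x))"
      by (auto simp: pn scaleR_diff_left[symmetric] diff_divide_distrib)
    also have "(\<integral>x. (1/c) *\<^sub>R (z x *\<^sub>R \<phi> x) \<partial>M) = (1/c) *\<^sub>R V"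
      unfolding V_def by (rule integral_scaleR_right)
    finally have "(\<integral>x. \<phi> x \<partial>Q1) = (\<integral>x. \<phi> x \<partial>Q2)" using V0 e1 e2 by simp
    then have "Q1 = Q2" using char Q1p Q2p sQ i1 i2 unfolding characteristic_def by blast
    then have "AE x in M. ennreal (p x / c) = ennreal (n x / c)"
      unfolding Q1_def Q2_def
      by (intro sigma_finite_measure.density_unique[OF sigma_finite_measure_axioms]) (auto intro!: divm)
    then show ?thesis
    proof eventually_elim
      case (elim x)
      then have "p x / c = n x / c" using p0 cpos by (subst (asm) ennreal_inj) auto
      then have "p x = n x" using cpos by simp
      then show ?case by (simp add: p_def n_def max_def split: if_splits)
    qed
  qed
qed

lemma ts_zero: "(\<lambda>x. 0) \<in> tensor_span \<phi>"
  unfolding tensor_span_def by (rule CollectI, rule exI[of _ 0]) simp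

lemma ts_scale:
  assumes "u \<in> tensor_span \<phi>" shows "(\<lambda>x. a *\<^sub>R u x) \<in> tensor_span \<phi>"
proof -
  from assms obtain n :: nat and g h where u: "u = (\<lambda>x. \<Sum>i<n. (h i \<bullet> \<phi> x) *\<^sub>R g i)"
    unfolding tensor_span_def by blast
  have eq: "(\<lambda>x. a *\<^sub>R u x) = (\<lambda>x. \<Sum>i<n. (h i \<bullet> \<phi> x) *\<^sub>R (a *\<^sub>R g i))"
    unfolding u by (simp add: scaleR_sum_right mult.commute)
  show ?thesis unfolding tensor_span_def by (intro CollectI exI, rule eq)
qed

lemma ts_add_term:
  assumes "u \<in> tensor_span \<phi>" shows "(\<lambda>x. u x + (h' \<bullet> \<phi> x) *\<^sub>R g') \<in> tensor_span \<phi>"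
proof -
  from assms obtain n :: nat and g h where u: "u = (\<lambda>x. \<Sum>i<n. (h i \<bullet> \<phi> x) *\<^sub>R g i)"
    unfolding tensor_span_def by blast
  have "(\<lambda>x. u x + (h' \<bullet> \<phi> x) *\<^sub>R g') = (\<lambda>x. \<Sum>i<Suc n. ((h(n := h')) i \<bullet> \<phi> x) *\<^sub>R (g(n := g')) i)"
    unfolding u by (auto intro!: sum.cong)
  then show ?thesis unfolding tensor_span_def by blast
qed

lemma ts_add:
  assumes "u \<in> tensor_span \<phi>" "v \<in> tensor_span \<phi>" shows "(\<lambda>x. u x + v x) \<in> tensor_span \<phi>"
proof -
  from assms(2) obtain n :: nat and g h where v: "v = (\<lambda>x. \<Sum>i<n. (h i \<bullet> \<phi> x) *\<^sub>R g i)"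
    unfolding tensor_span_def by blast
  have "(\<lambda>x. u x + (\<Sum>i<k. (h i \<bullet> \<phi> x) *\<^sub>R g i)) \<in> tensor_span \<phi>" for k
  proof (induction k)
    case 0 then show ?case using assms(1) by simp
  next
    case (Suc k)
    have "(\<lambda>x. u x + (\<Sum>i<Suc k. (h i \<bullet> \<phi> x) *\<^sub>R g i)) = (\<lambda>x. (u x + (\<Sum>i<k. (h i \<bullet> \<phi> x) *\<^sub>R g i)) + (h k \<bullet> \<phi> x) *\<^sub>R g k)"
      by (simp add: add.assoc)
    then show ?case using ts_add_term[OF Suc] by simp
  qed
  then show ?thesis unfolding v .
qed

context prob_space begin

lemma var_le:
  fixes g :: "'a \<Rightarrow> 'g::{real_inner,banach,second_countable_topology}"
  assumes gL2: "g \<in> L2 M"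
  shows "n2 M (\<lambda>x. g x - (\<integral>z. g z \<partial>M)) \<le> n2 M (\<lambda>x. g x - c)"
proof -
  define m where "m = (\<integral>z. g z \<partial>M)"
  have GL2: "(\<lambda>x. g x - m) \<in> L2 M" by (intro L2_diff gL2 L2_const)
  have KL2: "(\<lambda>x. m - c) \<in> L2 M" by (rule L2_const)
  have gi: "integrable M g" using gL2 by (rule L2_integrable)
  have eq: "(\<lambda>x. g x - c) = (\<lambda>x. (g x - m) + (m - c))" by auto
  have "ip M (\<lambda>x. g x - m) (\<lambda>x. m - c) = (\<integral>x. g x - m \<partial>M) \<bullet> (m - c)"
    unfolding ip_def using gi by (intro integral_inner_left) auto
  also have "(\<integral>x. g x - m \<partial>M) = 0" using gi by (simp add: m_def prob_space)
  finally have ip0: "ip M (\<lambda>x. g x - m) (\<lambda>x. m - c) = 0" by simp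
  have "n2 M (\<lambda>x. g x - c) = n2 M (\<lambda>x. g x - m) + 2 * ip M (\<lambda>x. g x - m) (\<lambda>x. m - c) + n2 M (\<lambda>x. m - c)"
    unfolding eq by (rule n2_add[OF GL2 KL2])
  then show ?thesis using ip0 n2_nonneg[of M "\<lambda>x. m - c"] by (simp add: m_def)
qed

end

theorem mainTheorem16:
  fixes P :: "'a measure" and MX :: "'x measure" and MY :: "'y measure"
    and X :: "'a \<Rightarrow> 'x" and Y :: "'a \<Rightarrow> 'y"
    and \<phi> :: "'x \<Rightarrow> 'h::{real_inner,banach,second_countable_topology}"
    and \<psi> :: "'y \<Rightarrow> 'g::{real_inner,banach,second_countable_topology}"
    and m :: "'x \<Rightarrow> 'g"
  assumes P: "prob_space P"
    and X: "X \<in> measurable P MX" and Y: "Y \<in> measurable P MY"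
    \<comment> \<open>H and G are the RKHSs generated by the feature maps (span of features dense)\<close>
    and H_rkhs: "closure (span (range \<phi>)) = UNIV"
    and G_rkhs: "closure (span (range \<psi>)) = UNIV"
    \<comment> \<open>measurable kernels k(x,x') = <phi x, phi x'>, l(y,y') = <psi y, psi y'>\<close>
    and k_meas: "\<And>x'. (\<lambda>x. \<phi> x \<bullet> \<phi> x') \<in> borel_measurable MX"
    and l_meas: "\<And>y'. (\<lambda>y. \<psi> y \<bullet> \<psi> y') \<in> borel_measurable MY"
    and \<phi>_inj: "inj \<phi>"
    \<comment> \<open>V = phi(X) in L2(P;H), U = psi(Y) in L2(P;G)\<close>
    and V_L2: "(\<lambda>\<omega>. \<phi> (X \<omega>)) \<in> L2 P"
    and U_L2: "(\<lambda>\<omega>. \<psi> (Y \<omega>)) \<in> L2 P"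
    \<comment> \<open>||h||_H = 0 iff h = 0 P_X-a.e.\<close>
    and H_ae: "\<And>h. (AE x in distr P MX X. h \<bullet> \<phi> x = 0) \<Longrightarrow> h = 0"
    \<comment> \<open>m(x) = E[U | X = x], an element of L2(P_X;G)\<close>
    and m_L2: "m \<in> L2 (distr P MX X)"
    and m_int: "integrable P (\<lambda>\<omega>. m (X \<omega>))"
    and m_cond: "\<And>A. A \<in> sets MX \<Longrightarrow>
        (\<integral>\<omega>. indicator (X -` A \<inter> space P) \<omega> *\<^sub>R \<psi> (Y \<omega>) \<partial>P)
      = (\<integral>\<omega>. indicator (X -` A \<inter> space P) \<omega> *\<^sub>R m (X \<omega>) \<partial>P)"
    and char: "characteristic MX \<phi>"
  shows "dense_mod_const (distr P MX X) (tensor_span \<phi> :: ('x \<Rightarrow> 'g) set)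
       \<and> in_closure_mod_const (distr P MX X) (tensor_span \<phi>) m"
proof -
  interpret P: prob_space P by (rule P)
  define \<mu> where "\<mu> = distr P MX X"
  have \<mu>p: "prob_space \<mu>" unfolding \<mu>_def by (rule P.prob_space_distr[OF X])
  interpret \<mu>: prob_space \<mu> by (rule \<mu>p)
  have s\<mu>: "sets \<mu> = sets MX" by (simp add: \<mu>_def)
  have h\<phi>: "(\<lambda>x. h \<bullet> \<phi> x) \<in> borel_measurable MX" for h by (rule inner_phi_meas[OF H_rkhs k_meas])
  have \<phi>mX: "\<phi> \<in> borel_measurable MX" by (rule phi_meas[OF h\<phi>])
  have \<phi>m: "\<phi> \<in> borel_measurable \<mu>" using \<phi>mX by (subst measurable_cong_sets[OF s\<mu> refl])
  have h\<phi>\<mu>: "(\<lambda>x. h \<bullet> \<phi> x) \<in> borel_measurable \<mu>" for h using h\<phi> by (subst measurable_cong_sets[OF s\<mu> refl])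
  have \<phi>2: "integrable \<mu> (\<lambda>x. (norm (\<phi> x))\<^sup>2)"
    unfolding \<mu>_def using \<phi>mX L2_sq[OF V_L2] by (subst integrable_distr_eq[OF X]) auto
  have termL2: "(\<lambda>x. (h \<bullet> \<phi> x) *\<^sub>R (g::'g)) \<in> L2 \<mu>" for h g
  proof -
    have "integrable \<mu> (\<lambda>x. (norm ((h \<bullet> \<phi> x) *\<^sub>R g))\<^sup>2)"
    proof (rule Bochner_Integration.integrable_bound)
      show "integrable \<mu> (\<lambda>x. ((norm h)\<^sup>2 * (norm g)\<^sup>2) * (norm (\<phi> x))\<^sup>2)"
        using \<phi>2 by (rule Bochner_Integration.integrable_mult_right)
      show "(\<lambda>x. (norm ((h \<bullet> \<phi> x) *\<^sub>R g))\<^sup>2) \<in> borel_measurable \<mu>" using h\<phi>\<mu>[of h] by measurable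
      show "AE x in \<mu>. norm ((norm ((h \<bullet> \<phi> x) *\<^sub>R g))\<^sup>2) \<le> norm (((norm h)\<^sup>2 * (norm g)\<^sup>2) * (norm (\<phi> x))\<^sup>2)"
      proof (intro AE_I2)
        fix x
        have "\<bar>h \<bullet> \<phi> x\<bar> \<le> norm h * norm (\<phi> x)" by (rule Cauchy_Schwarz_ineq2)
        then have "(h \<bullet> \<phi> x)\<^sup>2 \<le> (norm h * norm (\<phi> x))\<^sup>2"
          by (metis abs_ge_zero power2_abs power_mono)
        then have "(h \<bullet> \<phi> x)\<^sup>2 * (norm g)\<^sup>2 \<le> (norm h * norm (\<phi> x))\<^sup>2 * (norm g)\<^sup>2"
          by (rule mult_right_mono) simp
        then show "norm ((norm ((h \<bullet> \<phi> x) *\<^sub>R g))\<^sup>2) \<le> norm (((norm h)\<^sup>2 * (norm g)\<^sup>2) * (norm (\<phi> x))\<^sup>2)"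
          by (simp add: power_mult_distrib mult_ac)
      qed
    qed
    moreover have "(\<lambda>x. (h \<bullet> \<phi> x) *\<^sub>R g) \<in> borel_measurable \<mu>" using h\<phi>\<mu>[of h] by measurable
    ultimately show ?thesis unfolding L2_def by simp
  qed
  have SL2: "u \<in> L2 \<mu>" if "u \<in> tensor_span \<phi>" for u :: "'x \<Rightarrow> 'g"
  proof -
    from that obtain n :: nat and g h where u: "u = (\<lambda>x. \<Sum>i<n. (h i \<bullet> \<phi> x) *\<^sub>R g i)"
      unfolding tensor_span_def by blast
    have "(\<lambda>x. \<Sum>i<k. (h i \<bullet> \<phi> x) *\<^sub>R g i) \<in> L2 \<mu>" for k
    proof (induction k)
      case 0 then show ?case using \<mu>.L2_const[of 0] by simp
    next
      case (Suc k)
      show ?case using L2_add[OF Suc termL2[of "h k" "g k"]] by simp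
    qed
    then show ?thesis unfolding u .
  qed
  define T where "T = {v. \<exists>u\<in>(tensor_span \<phi> :: ('x \<Rightarrow> 'g) set). \<exists>c. v = (\<lambda>x. u x + c)}"
  have TL2: "T \<subseteq> L2 \<mu>" unfolding T_def using SL2 \<mu>.L2_const L2_add by blast
  have T0: "(\<lambda>x. 0) \<in> T" unfolding T_def by (rule CollectI, rule bexI[OF _ ts_zero], rule exI[of _ 0]) simp
  have Tlin: "(\<lambda>x. a *\<^sub>R u x + b *\<^sub>R v x) \<in> T" if "u \<in> T" "v \<in> T" for u v a b
  proof -
    from that obtain u1 c1 u2 c2 where u1: "u1 \<in> tensor_span \<phi>" "u = (\<lambda>x. u1 x + c1)"
      and u2: "u2 \<in> tensor_span \<phi>" "v = (\<lambda>x. u2 x + c2)" unfolding T_def by blast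
    have mem: "(\<lambda>x. a *\<^sub>R u1 x + b *\<^sub>R u2 x) \<in> tensor_span \<phi>" by (intro ts_add ts_scale u1 u2)
    have eq: "(\<lambda>x. a *\<^sub>R u x + b *\<^sub>R v x) = (\<lambda>x. (\<lambda>x. a *\<^sub>R u1 x + b *\<^sub>R u2 x) x + (a *\<^sub>R c1 + b *\<^sub>R c2))"
      unfolding u1 u2 by (auto simp: algebra_simps)
    show ?thesis unfolding T_def by (rule CollectI, rule bexI[OF _ mem], rule exI, rule eq)
  qed
  obtain D :: "'g set" where cD: "countable D" and D: "\<And>X. open X \<Longrightarrow> X \<noteq> {} \<Longrightarrow> \<exists>d\<in>D. d \<in> X"
    by (erule countable_dense_setE)
  have dense: "in_closure_mod_const \<mu> (tensor_span \<phi>) f" if fL2: "f \<in> L2 \<mu>" for f :: "'x \<Rightarrow> 'g"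
  proof -
    obtain w where wL2: "w \<in> L2 \<mu>" and orth: "\<forall>v\<in>T. ip \<mu> w v = 0"
      and imp: "(AE x in \<mu>. w x = 0) \<longrightarrow> (\<forall>e>0. \<exists>v\<in>T. n2 \<mu> (\<lambda>x. f x - v x) < e)"
      using \<mu>.proj_L2[OF fL2 TL2 T0 Tlin] by blast
    have wm[measurable]: "w \<in> borel_measurable \<mu>" using wL2 by (rule L2_meas)
    have AEg: "AE x in \<mu>. w x \<bullet> g = 0" for g
    proof (rule char_zero[OF \<mu>p s\<mu> \<phi>m \<phi>2 char])
      show "(\<lambda>x. w x \<bullet> g) \<in> L2 \<mu>"
      proof -
        have "integrable \<mu> (\<lambda>x. (norm (w x \<bullet> g))\<^sup>2)"
        proof (rule Bochner_Integration.integrable_bound)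
          show "integrable \<mu> (\<lambda>x. (norm g)\<^sup>2 * (norm (w x))\<^sup>2)"
            using L2_sq[OF wL2] by (rule Bochner_Integration.integrable_mult_right)
          show "(\<lambda>x. (norm (w x \<bullet> g))\<^sup>2) \<in> borel_measurable \<mu>" by measurable
          show "AE x in \<mu>. norm ((norm (w x \<bullet> g))\<^sup>2) \<le> norm ((norm g)\<^sup>2 * (norm (w x))\<^sup>2)"
          proof (intro AE_I2)
            fix x
            have "\<bar>w x \<bullet> g\<bar> \<le> norm (w x) * norm g" by (rule Cauchy_Schwarz_ineq2)
            then have "(w x \<bullet> g)\<^sup>2 \<le> (norm (w x) * norm g)\<^sup>2"
              by (metis abs_ge_zero power2_abs power_mono)
            then show "norm ((norm (w x \<bullet> g))\<^sup>2) \<le> norm ((norm g)\<^sup>2 * (norm (w x))\<^sup>2)"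
              by (simp add: power_mult_distrib mult_ac)
          qed
        qed
        moreover have "(\<lambda>x. w x \<bullet> g) \<in> borel_measurable \<mu>" by measurable
        ultimately show ?thesis unfolding L2_def by simp
      qed
      have "(\<lambda>x. g) \<in> T" unfolding T_def by (rule CollectI, rule bexI[OF _ ts_zero], rule exI[of _ g]) simp
      then have "ip \<mu> w (\<lambda>x. g) = 0" using orth by blast
      then show "(\<integral>x. w x \<bullet> g \<partial>\<mu>) = 0" by (simp add: ip_def)
      fix h
      have mem: "(\<lambda>x. (h \<bullet> \<phi> x) *\<^sub>R g) \<in> tensor_span \<phi>"
        using ts_add_term[OF ts_zero, where h'=h and g'=g] by simp
      have "(\<lambda>x. (h \<bullet> \<phi> x) *\<^sub>R g + 0) \<in> T" unfolding T_def
        by (rule CollectI, rule bexI[OF _ mem], rule exI[of _ 0]) simp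
      then have "ip \<mu> w (\<lambda>x. (h \<bullet> \<phi> x) *\<^sub>R g + 0) = 0" using orth by blast
      then show "(\<integral>x. (w x \<bullet> g) * (h \<bullet> \<phi> x) \<partial>\<mu>) = 0" by (simp add: ip_def mult.commute)
    qed
    have "AE x in \<mu>. \<forall>g\<in>D. w x \<bullet> g = 0"
      using cD AEg by (subst AE_ball_countable) auto
    then have AE0: "AE x in \<mu>. w x = 0"
    proof eventually_elim
      case (elim x)
      have "w x \<in> {g. w x \<bullet> g = 0}"
        by (rule closed_dense_univ[OF _ _ D]) (use elim in \<open>auto intro!: closed_Collect_eq continuous_intros\<close>)
      then show ?case by simp
    qed
    show ?thesis unfolding in_closure_mod_const_def
    proof (intro allI impI)
      fix e :: real assume e: "0 < e"
      then obtain v where vT: "v \<in> T" and v: "n2 \<mu> (\<lambda>x. f x - v x) < e\<^sup>2"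
        using imp AE0 by (meson zero_less_power)
      then obtain u c where uS: "u \<in> tensor_span \<phi>" and vu: "v = (\<lambda>x. u x + c)" unfolding T_def by blast
      have gL2: "(\<lambda>x. f x - u x) \<in> L2 \<mu>" by (intro L2_diff fL2 SL2 uS)
      have "cnorm \<mu> (\<lambda>x. f x - u x) = sqrt (n2 \<mu> (\<lambda>x. (f x - u x) - (\<integral>z. f z - u z \<partial>\<mu>)))"
        by (simp add: cnorm_def n2_def)
      also have "\<dots> \<le> sqrt (n2 \<mu> (\<lambda>x. (f x - u x) - c))"
        by (rule real_sqrt_le_mono, rule \<mu>.var_le[OF gL2])
      also have "(\<lambda>x. (f x - u x) - c) = (\<lambda>x. f x - v x)" unfolding vu by (auto simp: algebra_simps)
      also have "sqrt (n2 \<mu> (\<lambda>x. f x - v x)) < sqrt (e\<^sup>2)" using v by (rule real_sqrt_less_mono)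
      also have "sqrt (e\<^sup>2) = e" using e by simp
      finally show "\<exists>u\<in>tensor_span \<phi>. cnorm \<mu> (\<lambda>x. f x - u x) < e" using uS by blast
    qed
  qed
  have "dense_mod_const \<mu> (tensor_span \<phi> :: ('x \<Rightarrow> 'g) set)"
    unfolding dense_mod_const_def using dense by blast
  moreover have "in_closure_mod_const \<mu> (tensor_span \<phi>) m"
    using dense m_L2 by (simp add: \<mu>_def)
  ultimately show ?thesis by (simp add: \<mu>_def)
qed

end
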